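(* Let $n,k\ge 1$ and let $\mathfrak{a}\in\mathcal{A}_n^k$ be such that $\mathrm{Der}_k(\mathfrak{a})$ is nonempty. Then: 1) $t_1(\mathfrak{a})=t_2(\mathfrak{a})$, and, listing the slots of type I or type II in increasing order of their index, their types alternate, beginning with a slot of type I; 2) $\mathrm{des}(\mathfrak{a})=\mathrm{des}(\mathrm{Der}_k(\mathfrak{a}))+t_1^{+}(\mathfrak{a})+t_3^{+}(\mathfrak{a})$ and $\mathrm{dez}(\mathfrak{a})=\mathrm{des}(\mathrm{Der}_k(\mathfrak{a}))+t_2^{+}(\mathfrak{a})+t_3^{+}(\mathfrak{a})$.
   Context: $\mathfrak{S}_n$ is the set of permutations of $[n]=\{1,\dots,n\}$; $\mathrm{FIX}(\pi)=\{i:\pi(i)=i\}$. For $k\ge1$, a $k$-arrangement of $[n]$ is a pair $\mathfrak{a}=(\pi,\phi)$ with $\pi\in\mathfrak{S}_n$ and $\phi:\mathrm{FIX}(\pi)\to\{-1,\dots,-k\}$ arbitrary; $\mathcal{A}_n^k$ is the set of them. The positive reduction of an integer word replaces every occurrence of its $i$-th smallest positive letter by $i$ (negative letters unchanged). The derangement form $\mathrm{df}_k(\mathfrak{a})$ is obtained from $\pi(1)\cdots\pi(n)$ by replacing $\pi(i)$ with $\phi(i)$ for each $i\in\mathrm{FIX}(\pi)$ and then applying positive reduction; the permutation form $\mathrm{pf}_k(\mathfrak{a})$ is obtained likewise, replacing only for $i\in\mathrm{FIX}(\pi)$ with $\phi(i)\ne-k$. For an integer word $w=w_1\cdots w_n$,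 $\mathrm{des}(w)=|\{i\in[n-1]:w_i>w_{i+1}\}|$; $\mathrm{des}(\mathfrak{a})=\mathrm{des}(\mathrm{pf}_k(\mathfrak{a}))$ and $\mathrm{dez}(\mathfrak{a})=\mathrm{des}(\mathrm{df}_k(\mathfrak{a}))$. The weak derangement part $\mathrm{Der}_k(\mathfrak{a})$ is the word obtained from $\mathrm{df}_k(\mathfrak{a})$ by deleting all letters $-k$; say it is $w=w_1\cdots w_m$. It is the derangement form of a unique $k$-arrangement $(\sigma,\phi')$ of $[m]$ with $\phi'$ never taking the value $-k$; its excedance word is $\mathbf{e}(w)=e_1\cdots e_m$ where $e_j=E$ if $\sigma(j)>j$ and $e_j=N$ if $\sigma(j)\le j$. (Equivalently, if $w_j$ comes from the letter at position $i_j$ of $\pi$, then $e_j=E$ iff $\pi(i_j)>i_j$.) Write $\mathrm{df}_k(\mathfrak{a})=S_0w_1S_1w_2\cdots S_{m-1}w_mS_m$, where each slot $S_i$ ($0\le i\le m$) is a possibly empty block of letters $-k$. Set $w_0=w_{m+1}=+\infty$ and $e_0=e_{m+1}=E$. The slot $S_i$ is of type I if $w_i>w_{i+1}$ and $(e_i,e_{i+1})=(E,N)$; type II if $w_i\le w_{i+1}$ and $(e_i,e_{i+1})=(N,E)$; type III if $w_i\le w_{i+1}$ and $(e_i,e_{i+1})\ne(N,E)$; type IV if $w_i>w_{i+1}$ and $(e_i,e_{i+1})\ne(E,N)$. $t_j(\mathfrak{a})$ is the number of slots (empty or not) of type $j$ ($j=1,2,3,4$ for I, II, III, IV), and $t_j^+(\mathfrak{a})$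 the number of nonempty slots of type $j$. *)

theory Defs
  imports "HOL-Combinatorics.Permutations" "HOL-Library.Extended_Real"
begin

text \<open>Words are lists of integers; positions in words are 0-based, elements of [n] are 1..n.
 A k-arrangement of [n] is (pi, phi) with pi permuting {1..n} and phi mapping each fixed point
 of pi into {-k..-1} (values of phi outside FIX(pi) are irrelevant).\<close>

definition is_arrangement :: "nat \<Rightarrow> nat \<Rightarrow> (nat \<Rightarrow> nat) \<Rightarrow> (nat \<Rightarrow> int) \<Rightarrow> bool" where
  "is_arrangement n k \<pi> \<phi> \<longleftrightarrow> \<pi> permutes {1..n} \<and>
     (\<forall>i\<in>{1..n}. \<pi> i = i \<longrightarrow> - int k \<le> \<phi> i \<and> \<phi> i \<le> -1)"

definition pos_red :: "int list \<Rightarrow> int list" where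
  "pos_red w = map (\<lambda>x. if 0 < x then int (card {y \<in> set w. 0 < y \<and> y \<le> x}) else x) w"

definition des_word :: "int list \<Rightarrow> nat" where
  "des_word w = card {i. Suc i < length w \<and> w ! i > w ! Suc i}"

definition df :: "nat \<Rightarrow> nat \<Rightarrow> (nat \<Rightarrow> nat) \<Rightarrow> (nat \<Rightarrow> int) \<Rightarrow> int list" where
  "df n k \<pi> \<phi> = pos_red (map (\<lambda>i. if \<pi> i = i then \<phi> i else int (\<pi> i)) [1..<n+1])"

definition pf :: "nat \<Rightarrow> nat \<Rightarrow> (nat \<Rightarrow> nat) \<Rightarrow> (nat \<Rightarrow> int) \<Rightarrow> int list" where
  "pf n k \<pi> \<phi> = pos_red (map (\<lambda>i. if \<pi> i = i \<and> \<phi> i \<noteq> - int k then \<phi> i else int (\<pi> i)) [1..<n+1])"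

definition des_arr :: "nat \<Rightarrow> nat \<Rightarrow> (nat \<Rightarrow> nat) \<Rightarrow> (nat \<Rightarrow> int) \<Rightarrow> nat" where
  "des_arr n k \<pi> \<phi> = des_word (pf n k \<pi> \<phi>)"

definition dez_arr :: "nat \<Rightarrow> nat \<Rightarrow> (nat \<Rightarrow> nat) \<Rightarrow> (nat \<Rightarrow> int) \<Rightarrow> nat" where
  "dez_arr n k \<pi> \<phi> = des_word (df n k \<pi> \<phi>)"

definition kept_pos :: "nat \<Rightarrow> nat \<Rightarrow> (nat \<Rightarrow> nat) \<Rightarrow> (nat \<Rightarrow> int) \<Rightarrow> nat list" where
  "kept_pos n k \<pi> \<phi> = (let d = df n k \<pi> \<phi> in filter (\<lambda>j. d ! j \<noteq> - int k) [0..<length d])"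

definition Der :: "nat \<Rightarrow> nat \<Rightarrow> (nat \<Rightarrow> nat) \<Rightarrow> (nat \<Rightarrow> int) \<Rightarrow> int list" where
  "Der n k \<pi> \<phi> = filter (\<lambda>x. x \<noteq> - int k) (df n k \<pi> \<phi>)"

text \<open>Excedance word of Der (True = E, False = N): the letter w_j comes from position
 i_j = (kept_pos ! (j-1)) + 1 of pi, and e_j = E iff pi(i_j) > i_j.\<close>
definition exc_word :: "nat \<Rightarrow> nat \<Rightarrow> (nat \<Rightarrow> nat) \<Rightarrow> (nat \<Rightarrow> int) \<Rightarrow> bool list" where
  "exc_word n k \<pi> \<phi> = map (\<lambda>j. \<pi> (Suc j) > Suc j) (kept_pos n k \<pi> \<phi>)"

definition wext :: "nat \<Rightarrow> nat \<Rightarrow> (nat \<Rightarrow> nat) \<Rightarrow> (nat \<Rightarrow> int) \<Rightarrow> nat \<Rightarrow> ereal" where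
  "wext n k \<pi> \<phi> i = (let w = Der n k \<pi> \<phi> in
     if i = 0 \<or> i = length w + 1 then \<infinity> else ereal (real_of_int (w ! (i - 1))))"

definition eext :: "nat \<Rightarrow> nat \<Rightarrow> (nat \<Rightarrow> nat) \<Rightarrow> (nat \<Rightarrow> int) \<Rightarrow> nat \<Rightarrow> bool" where
  "eext n k \<pi> \<phi> i = (let e = exc_word n k \<pi> \<phi> in
     if i = 0 \<or> i = length e + 1 then True else e ! (i - 1))"

text \<open>Slot S_i (0 \<le> i \<le> m) is nonempty iff there is a letter -k strictly between w_i and w_{i+1}
 in df (w_0 sits before position 0, w_{m+1} after the last position).
 pext i is the 1-based position of w_i in df, with pext 0 = 0 and pext (m+1) = n+1.\<close>
definition pext :: "nat \<Rightarrow> nat \<Rightarrow> (nat \<Rightarrow> nat) \<Rightarrow> (nat \<Rightarrow> int) \<Rightarrow> nat \<Rightarrow> nat" where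
  "pext n k \<pi> \<phi> i = (let p = kept_pos n k \<pi> \<phi> in
     if i = 0 then 0 else if i = length p + 1 then length (df n k \<pi> \<phi>) + 1 else Suc (p ! (i - 1)))"

definition slot_nonempty :: "nat \<Rightarrow> nat \<Rightarrow> (nat \<Rightarrow> nat) \<Rightarrow> (nat \<Rightarrow> int) \<Rightarrow> nat \<Rightarrow> bool" where
  "slot_nonempty n k \<pi> \<phi> i \<longleftrightarrow> Suc (pext n k \<pi> \<phi> i) < pext n k \<pi> \<phi> (Suc i)"

definition slot_type :: "nat \<Rightarrow> nat \<Rightarrow> (nat \<Rightarrow> nat) \<Rightarrow> (nat \<Rightarrow> int) \<Rightarrow> nat \<Rightarrow> nat" where
  "slot_type n k \<pi> \<phi> i = (let w = wext n k \<pi> \<phi>; e = eext n k \<pi> \<phi> in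
     if w i > w (Suc i) \<and> e i \<and> \<not> e (Suc i) then 1
     else if w i \<le> w (Suc i) \<and> \<not> e i \<and> e (Suc i) then 2
     else if w i \<le> w (Suc i) then 3
     else 4)"

definition slots :: "nat \<Rightarrow> nat \<Rightarrow> (nat \<Rightarrow> nat) \<Rightarrow> (nat \<Rightarrow> int) \<Rightarrow> nat set" where
  "slots n k \<pi> \<phi> = {0..length (Der n k \<pi> \<phi>)}"

definition t_cnt :: "nat \<Rightarrow> nat \<Rightarrow> nat \<Rightarrow> (nat \<Rightarrow> nat) \<Rightarrow> (nat \<Rightarrow> int) \<Rightarrow> nat" where
  "t_cnt j n k \<pi> \<phi> = card {i \<in> slots n k \<pi> \<phi>. slot_type n k \<pi> \<phi> i = j}"

definition t_plus :: "nat \<Rightarrow> nat \<Rightarrow> nat \<Rightarrow> (nat \<Rightarrow> nat) \<Rightarrow> (nat \<Rightarrow> int) \<Rightarrow> nat" where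
  "t_plus j n k \<pi> \<phi> = card {i \<in> slots n k \<pi> \<phi>. slot_type n k \<pi> \<phi> i = j \<and> slot_nonempty n k \<pi> \<phi> i}"

definition slots12 :: "nat \<Rightarrow> nat \<Rightarrow> (nat \<Rightarrow> nat) \<Rightarrow> (nat \<Rightarrow> int) \<Rightarrow> nat list" where
  "slots12 n k \<pi> \<phi> = filter (\<lambda>i. slot_type n k \<pi> \<phi> i \<in> {1, 2}) [0..<length (Der n k \<pi> \<phi>) + 1]"

end

theory Submission
  imports Defs
begin


lemma des_map_mono:
  assumes "\<And>x y. x \<in> set w \<Longrightarrow> y \<in> set w \<Longrightarrow> x < y \<Longrightarrow> f x < f y"
  shows "des_word (map f w) = des_word (w::int list)"
proof -
  have "(f (w ! Suc i) < f (w ! i)) = (w ! Suc i < w ! i)" if "Suc i < length w" for i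
  proof -
    have a: "w ! i \<in> set w" "w ! Suc i \<in> set w" using that by auto
    show ?thesis
    proof (cases "w ! Suc i < w ! i")
      case True then show ?thesis using assms a by auto
    next
      case False
      then have "w ! i < w ! Suc i \<or> w ! i = w ! Suc i" by auto
      then show ?thesis using assms[OF a(1) a(2)] False by auto
    qed
  qed
  then show ?thesis unfolding des_word_def by (auto intro!: arg_cong[where f=card])
qed

definition hfun :: "int list \<Rightarrow> int \<Rightarrow> int" where
  "hfun w x = (if 0 < x then int (card {y \<in> set w. 0 < y \<and> y \<le> x}) else x)"

lemma pos_red_hfun: "pos_red w = map (hfun w) w"
  unfolding pos_red_def hfun_def by simp

lemma hfun_pos: assumes "x \<in> set w" "0 < x" shows "0 < hfun w x"
proof -
  have "x \<in> {y \<in> set w. 0 < y \<and> y \<le> x}" using assms by simp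
  moreover have "finite {y \<in> set w. 0 < y \<and> y \<le> x}" by simp
  ultimately have "card {y \<in> set w. 0 < y \<and> y \<le> x} > 0"
    using card_gt_0_iff by blast
  then show ?thesis using assms(2) unfolding hfun_def by simp
qed

lemma hfun_nonpos: "x \<le> 0 \<Longrightarrow> hfun w x = x"
  unfolding hfun_def by simp

lemma hfun_strict:
  assumes "x \<in> set w" "y \<in> set w" "x < y"
  shows "hfun w x < hfun w y"
proof (cases "0 < x")
  case True
  have sub: "{z \<in> set w. 0 < z \<and> z \<le> x} \<subseteq> {z \<in> set w. 0 < z \<and> z \<le> y}"
    using assms(3) by auto
  have ny: "y \<notin> {z \<in> set w. 0 < z \<and> z \<le> x}" using assms(3) by simp
  have yy: "y \<in> {z \<in> set w. 0 < z \<and> z \<le> y}" using assms True by simp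
  have "{z \<in> set w. 0 < z \<and> z \<le> x} \<subset> {z \<in> set w. 0 < z \<and> z \<le> y}"
    using sub ny yy by blast
  then have "card {z \<in> set w. 0 < z \<and> z \<le> x} < card {z \<in> set w. 0 < z \<and> z \<le> y}"
    by (intro psubset_card_mono) simp_all
  moreover have "0 < y" using True assms(3) by simp
  ultimately show ?thesis using True unfolding hfun_def by simp
next
  case False
  then have hx: "hfun w x = x" by (simp add: hfun_nonpos)
  show ?thesis
  proof (cases "0 < y")
    case True then show ?thesis using hfun_pos[OF assms(2)] False hx by simp
  next
    case F2: False then show ?thesis using hx assms(3) by (simp add: hfun_nonpos)
  qed
qed

lemma hfun_less_iff: "x \<in> set w \<Longrightarrow> y \<in> set w \<Longrightarrow> hfun w x < hfun w y \<longleftrightarrow> x < y"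
  by (metis hfun_strict linorder_neq_iff order_less_asym)

lemma hfun_le_iff: "x \<in> set w \<Longrightarrow> y \<in> set w \<Longrightarrow> hfun w x \<le> hfun w y \<longleftrightarrow> x \<le> y"
  by (meson hfun_less_iff not_le)

lemma des_pos_red: "des_word (pos_red w) = des_word w"
  unfolding pos_red_hfun by (rule des_map_mono) (rule hfun_strict)

lemma des_upt: "des_word (map g [1..<n+1]) = card {x. 1 \<le> x \<and> x < n \<and> (g (Suc x) :: int) < g x}"
proof -
  have "des_word (map g [1..<n+1]) = card {i. Suc i < n \<and> g (Suc (Suc i)) < g (Suc i)}"
  proof -
    have e: "map g [1..<n+1] ! i = g (Suc i)" if "i < n" for i
      using that by (simp del: upt_Suc)
    show ?thesis unfolding des_word_def
      by (rule arg_cong[where f=card]) (auto simp: e simp del: upt_Suc)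
  qed
  also have "\<dots> = card (Suc ` {i. Suc i < n \<and> g (Suc (Suc i)) < g (Suc i)})"
    by (simp add: card_image)
  also have "Suc ` {i. Suc i < n \<and> g (Suc (Suc i)) < g (Suc i)} = {x. 1 \<le> x \<and> x < n \<and> g (Suc x) < g x}"
  proof (intro set_eqI iffI)
    fix x assume "x \<in> {x. 1 \<le> x \<and> x < n \<and> g (Suc x) < g x}"
    then show "x \<in> Suc ` {i. Suc i < n \<and> g (Suc (Suc i)) < g (Suc i)}"
      by (intro image_eqI[where x="x - 1"]) auto
  qed auto
  finally show ?thesis .
qed

lemma filter_nth_map:
  "filter Q xs = map (nth xs) (filter (\<lambda>j. Q (xs ! j)) [0..<length xs])"
proof (induction xs rule: rev_induct)
  case Nil then show ?case by simp
next
  case (snoc x xs)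
  have "map (nth (xs @ [x])) (filter (\<lambda>j. Q ((xs @ [x]) ! j)) [0..<length xs])
      = map (nth xs) (filter (\<lambda>j. Q (xs ! j)) [0..<length xs])"
  proof -
    have "filter (\<lambda>j. Q ((xs @ [x]) ! j)) [0..<length xs] = filter (\<lambda>j. Q (xs ! j)) [0..<length xs]"
      by (rule filter_cong) (auto simp: nth_append)
    moreover have "map (nth (xs @ [x])) (filter (\<lambda>j. Q (xs ! j)) [0..<length xs])
       = map (nth xs) (filter (\<lambda>j. Q (xs ! j)) [0..<length xs])"
      by (rule map_cong) (auto simp: nth_append)
    ultimately show ?thesis by simp
  qed
  then show ?case using snoc by simp
qed

lemma partition_card:
  fixes P :: "nat \<Rightarrow> nat"
  assumes "P 0 = 0" "\<And>i. i \<le> m \<Longrightarrow> P i < P (Suc i)"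
  shows "card {x \<in> A. x < P (Suc m)} = (\<Sum>i\<le>m. card {x \<in> A. P i \<le> x \<and> x < P (Suc i)})"
  using assms(2)
proof (induction m)
  case 0
  have "{x \<in> A. x < P (Suc 0)} = {x \<in> A. P 0 \<le> x \<and> x < P (Suc 0)}" using assms(1) by simp
  then show ?case by simp
next
  case (Suc m)
  have le: "P (Suc m) \<le> P (Suc (Suc m))" using Suc.prems[of "Suc m"] by simp
  have IH: "card {x \<in> A. x < P (Suc m)} = (\<Sum>i\<le>m. card {x \<in> A. P i \<le> x \<and> x < P (Suc i)})"
    using Suc.IH Suc.prems by simp
  define X where "X = {x \<in> A. x < P (Suc m)}"
  define Y where "Y = {x \<in> A. P (Suc m) \<le> x \<and> x < P (Suc (Suc m))}"
  have U: "{x \<in> A. x < P (Suc (Suc m))} = X \<union> Y"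
    unfolding X_def Y_def using le by auto
  have fX: "finite X" unfolding X_def by (rule finite_subset[of _ "{..<P (Suc m)}"]) auto
  have fY: "finite Y" unfolding Y_def by (rule finite_subset[of _ "{..<P (Suc (Suc m))}"]) auto
  have d: "X \<inter> Y = {}" unfolding X_def Y_def by auto
  have "card {x \<in> A. x < P (Suc (Suc m))} = card X + card Y"
    unfolding U by (rule card_Un_disjoint[OF fX fY d])
  then show ?case using IH unfolding X_def Y_def by simp
qed

lemma changes_parity:
  assumes "e 0"
  shows "e i = even (\<Sum>t<i. of_bool (e t \<noteq> e (Suc t)) :: nat)"
  by (induction i) (use assms in auto)

lemma changes_count:
  assumes "e 0"
  shows "(\<Sum>t<i. of_bool (e t \<and> \<not> e (Suc t)) :: nat) = (\<Sum>t<i. of_bool (\<not> e t \<and> e (Suc t))) + of_bool (\<not> e i)"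
  by (induction i) (use assms in auto)

lemma filter_upt_nth_card:
  assumes "j < length (filter Q [0..<N])"
  shows "card {t. t < filter Q [0..<N] ! j \<and> Q t} = j"
  using assms
proof (induction N arbitrary: j)
  case 0 then show ?case by simp
next
  case (Suc N)
  show ?case
  proof (cases "j < length (filter Q [0..<N])")
    case True
    then show ?thesis using Suc by (auto simp: nth_append)
  next
    case False
    then have "Q N" "j = length (filter Q [0..<N])" using Suc.prems by (auto split: if_splits)
    then have "filter Q [0..<Suc N] ! j = N" by (simp add: nth_append)
    moreover have "length (filter Q [0..<N]) = card {t. t < N \<and> Q t}"
    proof -
      have "{i. i < N \<and> Q ([0..<N] ! i)} = {t. t < N \<and> Q t}" by auto
      then show ?thesis by (simp add: length_filter_conv_card)
    qed
    ultimately show ?thesis using \<open>j = _\<close> by simp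
  qed
qed




locale arr =
  fixes n k :: nat and \<pi> :: "nat \<Rightarrow> nat" and \<phi> :: "nat \<Rightarrow> int"
  assumes n1: "n \<ge> 1" and k1: "k \<ge> 1" and arrg: "is_arrangement n k \<pi> \<phi>"
    and der: "Der n k \<pi> \<phi> \<noteq> []"
begin

definition "a x = (if \<pi> x = x then \<phi> x else int (\<pi> x))"
definition "b x = (if \<pi> x = x \<and> \<phi> x \<noteq> - int k then \<phi> x else int (\<pi> x))"
definition "D x \<longleftrightarrow> \<pi> x = x \<and> \<phi> x = - int k"
definition "raw = map a [1..<n+1]"
definition "h = hfun raw"
abbreviation "kp \<equiv> kept_pos n k \<pi> \<phi>"
abbreviation "m \<equiv> length kp"
abbreviation "P \<equiv> pext n k \<pi> \<phi>"
abbreviation "E \<equiv> eext n k \<pi> \<phi>"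
abbreviation "W \<equiv> wext n k \<pi> \<phi>"
abbreviation "ty \<equiv> slot_type n k \<pi> \<phi>"

lemma perm: "\<pi> permutes {1..n}" using arrg unfolding is_arrangement_def by simp

lemma phi_range: "1 \<le> x \<Longrightarrow> x \<le> n \<Longrightarrow> \<pi> x = x \<Longrightarrow> - int k \<le> \<phi> x \<and> \<phi> x \<le> -1"
  using arrg unfolding is_arrangement_def by simp

lemma pi_inj: "\<pi> x = \<pi> y \<Longrightarrow> x = y"
  using permutes_inj[OF perm] by (simp add: inj_eq)

lemma df_eq: "df n k \<pi> \<phi> = pos_red raw"
proof -
  have "(\<lambda>i. if \<pi> i = i then \<phi> i else int (\<pi> i)) = a" by (rule ext) (simp add: a_def)
  then show ?thesis unfolding df_def raw_def by simp
qed

lemma pf_eq: "pf n k \<pi> \<phi> = pos_red (map b [1..<n+1])"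
proof -
  have "(\<lambda>i. if \<pi> i = i \<and> \<phi> i \<noteq> - int k then \<phi> i else int (\<pi> i)) = b" by (rule ext) (simp add: b_def)
  then show ?thesis unfolding pf_def by simp
qed

lemma len_raw: "length raw = n" unfolding raw_def by simp

lemma len_df: "length (df n k \<pi> \<phi>) = n"
  by (simp add: df_eq pos_red_def len_raw)

lemma raw_nth: "j < n \<Longrightarrow> raw ! j = a (Suc j)"
  unfolding raw_def by (simp del: upt_Suc)

lemma df_nth: "j < n \<Longrightarrow> df n k \<pi> \<phi> ! j = h (a (Suc j))"
  unfolding df_eq pos_red_hfun h_def using len_raw raw_nth by simp

lemma a_in: "1 \<le> x \<Longrightarrow> x \<le> n \<Longrightarrow> a x \<in> set raw"
  unfolding raw_def by (simp del: upt_Suc)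

lemma a_k_iff: "a x = - int k \<longleftrightarrow> D x"
  using k1 unfolding a_def D_def by auto

lemma h_k_iff: assumes "v \<in> set raw" shows "h v = - int k \<longleftrightarrow> v = - int k"
proof (cases "0 < v")
  case True then show ?thesis using hfun_pos[OF assms True] unfolding h_def by auto
next
  case False then show ?thesis unfolding h_def by (simp add: hfun_nonpos)
qed

lemma df_k: "j < n \<Longrightarrow> df n k \<pi> \<phi> ! j = - int k \<longleftrightarrow> D (Suc j)"
  using df_nth h_k_iff a_in a_k_iff by simp

lemma kp_eq: "kp = filter (\<lambda>j. \<not> D (Suc j)) [0..<n]"
  unfolding kept_pos_def Let_def len_df by (rule filter_cong) (auto simp: df_k)

lemma Der_eq: "Der n k \<pi> \<phi> = map (nth (df n k \<pi> \<phi>)) kp"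
  unfolding Der_def kept_pos_def Let_def by (rule filter_nth_map)

lemma lenDer: "length (Der n k \<pi> \<phi>) = m" unfolding Der_eq by simp

lemma m_pos: "m \<ge> 1" using der lenDer by (cases m) auto

lemma kp_lt: "t < m \<Longrightarrow> kp ! t < n"
proof -
  assume "t < m"
  then have "kp ! t \<in> set kp" by simp
  then show ?thesis unfolding kp_eq by simp
qed

lemma kp_notD: "t < m \<Longrightarrow> \<not> D (Suc (kp ! t))"
proof -
  assume "t < m"
  then have "kp ! t \<in> set kp" by simp
  then show ?thesis unfolding kp_eq by simp
qed

lemma kp_sorted: "t < t' \<Longrightarrow> t' < m \<Longrightarrow> kp ! t < kp ! t'"
proof -
  assume a: "t < t'" "t' < m"
  have "sorted_wrt (<) kp" unfolding kp_eq by (rule sorted_wrt_filter) (rule sorted_wrt_upt)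
  then show ?thesis using a sorted_wrt_nth_less by blast
qed

lemma kp_mem: "j < n \<Longrightarrow> \<not> D (Suc j) \<Longrightarrow> \<exists>t<m. kp ! t = j"
proof -
  assume "j < n" "\<not> D (Suc j)"
  then have "j \<in> set kp" unfolding kp_eq by simp
  then show ?thesis by (simp add: in_set_conv_nth)
qed

lemma P0: "P 0 = 0" unfolding pext_def by simp
lemma Pm: "P (Suc m) = Suc n" unfolding pext_def Let_def len_df by simp
lemma Pi: "1 \<le> i \<Longrightarrow> i \<le> m \<Longrightarrow> P i = Suc (kp ! (i - 1))"
  unfolding pext_def Let_def by simp

lemma P_range: "1 \<le> i \<Longrightarrow> i \<le> m \<Longrightarrow> 1 \<le> P i \<and> P i \<le> n"
  using Pi kp_lt by (simp add: Suc_le_eq)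

lemma P_notD: "1 \<le> i \<Longrightarrow> i \<le> m \<Longrightarrow> \<not> D (P i)"
  using Pi kp_notD by simp

lemma P_mono: "i \<le> m \<Longrightarrow> P i < P (Suc i)"
proof -
  assume i: "i \<le> m"
  show ?thesis
  proof (cases "i = 0")
    case True then show ?thesis using P0 Pm Pi[of 1] m_pos by (cases "m = 1") auto
  next
    case False
    show ?thesis
    proof (cases "i = m")
      case True then show ?thesis using Pm P_range[of m] m_pos by simp
    next
      case F2: False
      then show ?thesis using False i Pi[of i] Pi[of "Suc i"] kp_sorted[of "i - 1" i] by simp
    qed
  qed
qed

lemma P_le: "i \<le> j \<Longrightarrow> j \<le> Suc m \<Longrightarrow> P i \<le> P j"
proof (induction j)
  case 0 then show ?case by simp
next
  case (Suc j)
  show ?case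
  proof (cases "i = Suc j")
    case True then show ?thesis by simp
  next
    case False
    then have "P i \<le> P j" using Suc by simp
    also have "P j < P (Suc j)" using P_mono Suc.prems by simp
    finally show ?thesis by simp
  qed
qed

lemma P_less: "i < j \<Longrightarrow> j \<le> Suc m \<Longrightarrow> P i < P j"
  using P_mono[of i] P_le[of "Suc i" j] by simp

lemma gap: assumes "i \<le> m" "P i < x" "x < P (Suc i)" shows "D x \<and> 1 \<le> x \<and> x \<le> n"
proof -
  have x1: "1 \<le> x" using assms(2) by simp
  have "P (Suc i) \<le> Suc n" using P_le[of "Suc i" "Suc m"] Pm assms(1) by simp
  then have xn: "x \<le> n" using assms(3) by simp
  have "D x"
  proof (rule ccontr)
    assume nd: "\<not> D x"
    have "x - 1 < n" "\<not> D (Suc (x - 1))" using x1 xn nd by auto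
    then obtain t where t: "t < m" "kp ! t = x - 1" using kp_mem by blast
    have Pt: "P (Suc t) = x" using Pi[of "Suc t"] t x1 by simp
    show False
    proof (cases "Suc t \<le> i")
      case True then show False using P_le[of "Suc t" i] assms Pt by simp
    next
      case False then show False using P_le[of "Suc i" "Suc t"] assms Pt t by simp
    qed
  qed
  then show ?thesis using x1 xn by simp
qed

lemma exc_E: assumes "1 \<le> i" "i \<le> m" "P i < \<pi> (P i)" shows "P (Suc i) \<le> \<pi> (P i)"
proof (rule ccontr)
  assume "\<not> P (Suc i) \<le> \<pi> (P i)"
  then have "D (\<pi> (P i))" using gap[of i "\<pi> (P i)"] assms by simp
  then have "\<pi> (\<pi> (P i)) = \<pi> (P i)" unfolding D_def by simp
  then have "\<pi> (P i) = P i" using pi_inj by blast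
  then show False using assms(3) by simp
qed

lemma exc_N: assumes "1 \<le> i" "i \<le> m" "\<pi> (P i) < P i" shows "\<pi> (P i) \<le> P (i - 1)"
proof (rule ccontr)
  assume "\<not> \<pi> (P i) \<le> P (i - 1)"
  then have "D (\<pi> (P i))" using gap[of "i - 1" "\<pi> (P i)"] assms by simp
  then have "\<pi> (\<pi> (P i)) = \<pi> (P i)" unfolding D_def by simp
  then have "\<pi> (P i) = P i" using pi_inj by blast
  then show False using assms(3) by simp
qed

lemma a_kept: assumes "1 \<le> i" "i \<le> m"
  shows "b (P i) = a (P i)" "\<pi> (P i) = P i \<Longrightarrow> a (P i) < 0" "\<pi> (P i) \<noteq> P i \<Longrightarrow> a (P i) = int (\<pi> (P i))"
    "- int k < a (P i)"
proof -
  have nd: "\<not> D (P i)" using P_notD assms by simp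
  have r: "1 \<le> P i" "P i \<le> n" using P_range assms by auto
  show "b (P i) = a (P i)" using nd unfolding a_def b_def D_def by auto
  show "\<pi> (P i) = P i \<Longrightarrow> a (P i) < 0" using phi_range[OF r] unfolding a_def by auto
  show "\<pi> (P i) \<noteq> P i \<Longrightarrow> a (P i) = int (\<pi> (P i))" unfolding a_def by auto
  show "- int k < a (P i)" using phi_range[OF r] nd k1 unfolding a_def D_def by auto
qed

lemma a_gap: "D x \<Longrightarrow> a x = - int k" "D x \<Longrightarrow> b x = int x"
  unfolding a_def b_def D_def by auto

end


context arr begin

lemma len_exc: "length (exc_word n k \<pi> \<phi>) = m" unfolding exc_word_def by simp

lemma E_eq: "1 \<le> i \<Longrightarrow> i \<le> m \<Longrightarrow> E i = (P i < \<pi> (P i))"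
  unfolding eext_def Let_def len_exc using Pi by (simp add: exc_word_def)

lemma E0: "E 0" unfolding eext_def by simp
lemma Em: "E (Suc m)" unfolding eext_def Let_def len_exc by simp

lemma W0: "W 0 = \<infinity>" unfolding wext_def by simp
lemma Wm: "W (Suc m) = \<infinity>" unfolding wext_def Let_def lenDer by simp
lemma Wi: "1 \<le> i \<Longrightarrow> i \<le> m \<Longrightarrow> W i = ereal (real_of_int (h (a (P i))))"
proof -
  assume i: "1 \<le> i" "i \<le> m"
  have "Der n k \<pi> \<phi> ! (i - 1) = df n k \<pi> \<phi> ! (kp ! (i - 1))" using i by (simp add: Der_eq)
  also have "\<dots> = h (a (P i))" using i df_nth kp_lt Pi by simp
  finally show ?thesis unfolding wext_def Let_def lenDer using i by simp
qed

lemma W_less: "1 \<le> i \<Longrightarrow> Suc i \<le> m \<Longrightarrow> (W (Suc i) < W i) \<longleftrightarrow> a (P (Suc i)) < a (P i)"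
proof -
  assume i: "1 \<le> i" "Suc i \<le> m"
  have r: "a (P i) \<in> set raw" "a (P (Suc i)) \<in> set raw" using a_in P_range i by auto
  show ?thesis using Wi[of i] Wi[of "Suc i"] i hfun_less_iff[OF r(2) r(1)] unfolding h_def by simp
qed

lemma EN_desc: assumes "i \<le> m" "E i" "\<not> E (Suc i)" shows "W (Suc i) < W i"
proof -
  have si: "Suc i \<le> m" using assms Em by (cases "i = m") auto
  show ?thesis
  proof (cases "i = 0")
    case True then show ?thesis using W0 Wi[of 1] si by simp
  next
    case False
    then have i1: "1 \<le> i" by simp
    have e: "P i < \<pi> (P i)" using E_eq assms i1 by simp
    have ge: "P (Suc i) \<le> \<pi> (P i)" using exc_E[OF i1 assms(1) e] .
    have ai: "a (P i) = int (\<pi> (P i))" using a_kept(3)[OF i1 assms(1)] e by simp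
    have ne: "\<not> P (Suc i) < \<pi> (P (Suc i))" using E_eq[of "Suc i"] si assms by simp
    have "a (P (Suc i)) < a (P i)"
    proof (cases "\<pi> (P (Suc i)) = P (Suc i)")
      case True then show ?thesis using a_kept(2)[of "Suc i"] si ai by simp
    next
      case False then show ?thesis using a_kept(3)[of "Suc i"] si ai ne ge by simp
    qed
    then show ?thesis using W_less i1 si by simp
  qed
qed

lemma NE_asc: assumes "i \<le> m" "\<not> E i" "E (Suc i)" shows "W i \<le> W (Suc i)"
proof -
  have i1: "1 \<le> i" using assms E0 by (cases i) auto
  show ?thesis
  proof (cases "i = m")
    case True then show ?thesis using Wm by simp
  next
    case False
    then have si: "Suc i \<le> m" using assms by simp
    have e: "P (Suc i) < \<pi> (P (Suc i))" using E_eq[of "Suc i"] si assms by simp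
    have as: "a (P (Suc i)) = int (\<pi> (P (Suc i)))" using a_kept(3)[of "Suc i"] si e by simp
    have ne: "\<not> P i < \<pi> (P i)" using E_eq assms i1 by simp
    have pm: "P i < P (Suc i)" using P_mono assms by simp
    have "a (P i) < a (P (Suc i))"
    proof (cases "\<pi> (P i) = P i")
      case True then show ?thesis using a_kept(2)[OF i1 assms(1)] as by simp
    next
      case False then show ?thesis using a_kept(3)[OF i1 assms(1)] as ne e pm by simp
    qed
    then have "\<not> W (Suc i) < W i" using W_less i1 si by simp
    then show ?thesis by simp
  qed
qed

lemma type_char: "i \<le> m \<Longrightarrow> ty i = (if E i \<and> \<not> E (Suc i) then 1 else if \<not> E i \<and> E (Suc i) then 2
   else if W i \<le> W (Suc i) then 3 else 4)"
  unfolding slot_type_def Let_def using EN_desc[of i] NE_asc[of i] by (auto simp: not_le)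

end



lemma card1: "card {x::nat. x = p \<and> c} = of_bool c"
  by (cases c) auto

lemma card2: assumes "p \<noteq> (q::nat)" shows "card {x. (x = p \<and> c1) \<or> (x = q \<and> c2)} = of_bool c1 + of_bool c2"
proof -
  have "{x. (x = p \<and> c1) \<or> (x = q \<and> c2)} = (if c1 then {p} else {}) \<union> (if c2 then {q} else {})" by auto
  then show ?thesis using assms by (cases c1; cases c2) auto
qed

context arr begin

definition "Ab = {x. 1 \<le> x \<and> x < n \<and> b (Suc x) < b x}"
definition "Aa = {x. 1 \<le> x \<and> x < n \<and> a (Suc x) < a x}"
definition "Dw i = (of_bool (1 \<le> i \<and> Suc i \<le> m \<and> a (P (Suc i)) < a (P i)) :: nat)"
abbreviation "ne \<equiv> slot_nonempty n k \<pi> \<phi>"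

lemma P1_iff: "i \<le> m \<Longrightarrow> 1 \<le> P i \<longleftrightarrow> 1 \<le> i"
  using P0 P_range by (cases i) auto

lemma P_Suc_le: "Suc i \<le> m \<Longrightarrow> P (Suc i) \<le> n" using P_range[of "Suc i"] by simp

lemma P_top: "i \<le> m \<Longrightarrow> P (Suc i) \<le> Suc n" using P_le[of "Suc i" "Suc m"] Pm by simp

lemma slot_empty:
  assumes i: "i \<le> m" and e: "\<not> ne i" and g: "\<And>j. 1 \<le> j \<Longrightarrow> j \<le> m \<Longrightarrow> g (P j) = a (P j)"
  shows "card {x. (1 \<le> x \<and> x < n \<and> g (Suc x) < g x) \<and> P i \<le> x \<and> x < P (Suc i)} = Dw i"
proof -
  have ps: "P (Suc i) = Suc (P i)" using e P_mono[OF i] unfolding slot_nonempty_def by simp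
  have lt: "P i < n \<longleftrightarrow> Suc i \<le> m"
  proof (cases "i = m")
    case True then show ?thesis using ps Pm by simp
  next
    case False then show ?thesis using P_Suc_le[of i] ps i by simp
  qed
  have "{x. (1 \<le> x \<and> x < n \<and> g (Suc x) < g x) \<and> P i \<le> x \<and> x < P (Suc i)}
      = {x. x = P i \<and> (1 \<le> i \<and> Suc i \<le> m \<and> a (P (Suc i)) < a (P i))}"
  proof (intro set_eqI iffI)
    fix x assume "x \<in> {x. (1 \<le> x \<and> x < n \<and> g (Suc x) < g x) \<and> P i \<le> x \<and> x < P (Suc i)}"
    then have xx: "P i \<le> x" "x < Suc (P i)" "1 \<le> x" "x < n" "g (Suc x) < g x" using ps by auto
    then have x0: "x = P i" by simp
    have g5: "g (P (Suc i)) < g (P i)" using xx(5) unfolding x0 ps .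
    have x: "x = P i" "1 \<le> P i" "P i < n" "g (P (Suc i)) < g (P i)" using xx x0 g5 by auto
    then have "1 \<le> i" "Suc i \<le> m" using P1_iff i lt by auto
    then show "x \<in> {x. x = P i \<and> (1 \<le> i \<and> Suc i \<le> m \<and> a (P (Suc i)) < a (P i))}"
      using x g[of i] g[of "Suc i"] by simp
  next
    fix x assume "x \<in> {x. x = P i \<and> (1 \<le> i \<and> Suc i \<le> m \<and> a (P (Suc i)) < a (P i))}"
    then have x: "x = P i" "1 \<le> i" "Suc i \<le> m" "a (P (Suc i)) < a (P i)" by auto
    then show "x \<in> {x. (1 \<le> x \<and> x < n \<and> g (Suc x) < g x) \<and> P i \<le> x \<and> x < P (Suc i)}"
      using P1_iff[of i] lt g[of i] g[of "Suc i"] ps by simp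
  qed
  then show ?thesis unfolding Dw_def by (simp only: card1)
qed

lemma slot_ne_b:
  assumes i: "i \<le> m" and e: "ne i"
  shows "card {x \<in> Ab. P i \<le> x \<and> x < P (Suc i)} = of_bool (1 \<le> i \<and> E i) + of_bool (Suc i \<le> m \<and> \<not> E (Suc i))"
proof -
  have nei: "Suc (P i) < P (Suc i)" using e unfolding slot_nonempty_def .
  have top: "P (Suc i) \<le> Suc n" using P_top[OF i] .
  define y where "y = P (Suc i) - 1"
  have ypi: "P i \<noteq> y" using nei unfolding y_def by simp
  have S: "{x \<in> Ab. P i \<le> x \<and> x < P (Suc i)} = {x. (x = P i \<and> (1 \<le> i \<and> E i)) \<or> (x = y \<and> (Suc i \<le> m \<and> \<not> E (Suc i)))}"
  proof (intro set_eqI)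
    fix x
    show "x \<in> {x \<in> Ab. P i \<le> x \<and> x < P (Suc i)} \<longleftrightarrow> x \<in> {x. (x = P i \<and> (1 \<le> i \<and> E i)) \<or> (x = y \<and> (Suc i \<le> m \<and> \<not> E (Suc i)))}"
    proof (cases "x = P i")
      case True
      have g1: "D (Suc (P i))" using gap[OF i, of "Suc (P i)"] nei by simp
      have bs: "b (Suc (P i)) = int (Suc (P i))" using a_gap(2)[OF g1] .
      have "(1 \<le> P i \<and> P i < n \<and> b (Suc (P i)) < b (P i)) \<longleftrightarrow> 1 \<le> i \<and> E i"
      proof (cases "i = 0")
        case True then show ?thesis using P0 by simp
      next
        case False
        then have i1: "1 \<le> i" by simp
        have pn: "P i < n" using nei top by simp
        have bi: "b (P i) = a (P i)" using a_kept(1)[OF i1 i] .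
        show ?thesis
        proof (cases "P i < \<pi> (P i)")
          case True
          then have "P (Suc i) \<le> \<pi> (P i)" using exc_E[OF i1 i] by simp
          moreover have "a (P i) = int (\<pi> (P i))" using a_kept(3)[OF i1 i] True by simp
          ultimately show ?thesis using True E_eq[OF i1 i] bs bi nei pn i1 P1_iff[OF i] by simp
        next
          case False
          have "a (P i) < int (Suc (P i))"
          proof (cases "\<pi> (P i) = P i")
            case True then show ?thesis using a_kept(2)[OF i1 i] by simp
          next
            case F2: False then show ?thesis using a_kept(3)[OF i1 i] False by simp
          qed
          then show ?thesis using False E_eq[OF i1 i] bs bi by simp
        qed
      qed
      then show ?thesis using True ypi nei unfolding Ab_def by auto
    next
      case xne: False
      show ?thesis
      proof (cases "x = y")
        case True
        have yg: "P i < y" "y < P (Suc i)" using nei unfolding y_def by auto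
        have Dy: "D y" "1 \<le> y" using gap[OF i yg] by auto
        have by_: "b y = int y" using a_gap(2)[OF Dy(1)] .
        have sy: "Suc y = P (Suc i)" using nei unfolding y_def by simp
        have "(1 \<le> y \<and> y < n \<and> b (Suc y) < b y) \<longleftrightarrow> Suc i \<le> m \<and> \<not> E (Suc i)"
        proof (cases "Suc i \<le> m")
          case False
          then have "i = m" using i by simp
          then have "y = n" using Pm unfolding y_def by simp
          then show ?thesis using False by simp
        next
          case True
          have yn: "y < n" using P_Suc_le[OF True] sy by simp
          have bs: "b (P (Suc i)) = a (P (Suc i))" using a_kept(1)[of "Suc i"] True by simp
          show ?thesis
          proof (cases "P (Suc i) < \<pi> (P (Suc i))")
            case T2: True
            have "a (P (Suc i)) = int (\<pi> (P (Suc i)))" using a_kept(3)[of "Suc i"] True T2 by simp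
            then show ?thesis using T2 E_eq[of "Suc i"] True bs sy by_ by simp
          next
            case F2: False
            have "a (P (Suc i)) < int y"
            proof (cases "\<pi> (P (Suc i)) = P (Suc i)")
              case T3: True then show ?thesis using a_kept(2)[of "Suc i"] True Dy by simp
            next
              case F3: False
              then have "\<pi> (P (Suc i)) < P (Suc i)" using F2 by simp
              then have "\<pi> (P (Suc i)) \<le> P i" using exc_N[of "Suc i"] True by simp
              then show ?thesis using a_kept(3)[of "Suc i"] True F3 yg by simp
            qed
            then show ?thesis using F2 E_eq[of "Suc i"] True bs sy Dy yn by_ by simp
          qed
        qed
        then show ?thesis using True xne sy yg by (auto simp: Ab_def by_ simp del: One_nat_def)
      next
        case False
        have "\<not> (x \<in> Ab \<and> P i \<le> x \<and> x < P (Suc i))"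
        proof
          assume A: "x \<in> Ab \<and> P i \<le> x \<and> x < P (Suc i)"
          then have g1: "P i < x" "x < P (Suc i)" "P i < Suc x" "Suc x < P (Suc i)"
            using xne False unfolding y_def by auto
          have "b x = int x" using a_gap(2) gap[OF i g1(1) g1(2)] by simp
          moreover have "b (Suc x) = int (Suc x)" using a_gap(2) gap[OF i g1(3) g1(4)] by simp
          ultimately show False using A unfolding Ab_def by simp
        qed
        then show ?thesis using xne False by simp
      qed
    qed
  qed
  show ?thesis unfolding S by (rule card2[OF ypi])
qed

end


context arr begin

lemma slot_ne_a:
  assumes i: "i \<le> m" and e: "ne i"
  shows "card {x \<in> Aa. P i \<le> x \<and> x < P (Suc i)} = of_bool (1 \<le> i)"
proof -
  have nei: "Suc (P i) < P (Suc i)" using e unfolding slot_nonempty_def .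
  have top: "P (Suc i) \<le> Suc n" using P_top[OF i] .
  have S: "{x \<in> Aa. P i \<le> x \<and> x < P (Suc i)} = {x. x = P i \<and> 1 \<le> i}"
  proof (intro set_eqI)
    fix x
    show "x \<in> {x \<in> Aa. P i \<le> x \<and> x < P (Suc i)} \<longleftrightarrow> x \<in> {x. x = P i \<and> 1 \<le> i}"
    proof (cases "x = P i")
      case True
      have g1: "D (Suc (P i))" using gap[OF i, of "Suc (P i)"] nei by simp
      have as: "a (Suc (P i)) = - int k" using a_gap(1)[OF g1] .
      have pn: "P i < n" using nei top by simp
      have "(1 \<le> P i \<and> P i < n \<and> a (Suc (P i)) < a (P i)) \<longleftrightarrow> 1 \<le> i"
      proof (cases "i = 0")
        case True then show ?thesis using P0 by simp
      next
        case False
        then have i1: "1 \<le> i" by simp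
        then show ?thesis using a_kept(4)[OF i1 i] as pn P1_iff[OF i] by simp
      qed
      then show ?thesis using True nei unfolding Aa_def by auto
    next
      case False
      have "\<not> (x \<in> Aa \<and> P i \<le> x \<and> x < P (Suc i))"
      proof
        assume A: "x \<in> Aa \<and> P i \<le> x \<and> x < P (Suc i)"
        then have g1: "P i < x" "x < P (Suc i)" "x < n" using False unfolding Aa_def by auto
        have ax: "a x = - int k" using a_gap(1) gap[OF i g1(1) g1(2)] by simp
        have "\<not> a (Suc x) < - int k"
        proof (cases "Suc x < P (Suc i)")
          case True
          then show ?thesis using a_gap(1) gap[OF i _ True] g1 by simp
        next
          case False
          then have sx: "Suc x = P (Suc i)" using g1 by simp
          have "Suc i \<le> m"
          proof (rule ccontr)
            assume "\<not> Suc i \<le> m"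
            then have "i = m" using i by simp
            then show False using sx Pm g1 by simp
          qed
          then show ?thesis using a_kept(4)[of "Suc i"] sx by simp
        qed
        then show False using A ax unfolding Aa_def by simp
      qed
      then show ?thesis using False by simp
    qed
  qed
  show ?thesis unfolding S by (rule card1)
qed

lemma Wd: "1 \<le> i \<Longrightarrow> Suc i \<le> m \<Longrightarrow> (W i \<le> W (Suc i)) \<longleftrightarrow> \<not> a (P (Suc i)) < a (P i)"
  using W_less[of i] by (simp add: not_less[symmetric])

lemma slotP:
  assumes i: "i \<le> m"
  shows "card {x \<in> Ab. P i \<le> x \<and> x < P (Suc i)} = Dw i + of_bool (ne i \<and> ty i = 1) + of_bool (ne i \<and> ty i = 3)"
proof (cases "ne i")
  case False
  have "{x \<in> Ab. P i \<le> x \<and> x < P (Suc i)} = {x. (1 \<le> x \<and> x < n \<and> b (Suc x) < b x) \<and> P i \<le> x \<and> x < P (Suc i)}"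
    unfolding Ab_def by auto
  then show ?thesis using slot_empty[OF i False, of b] a_kept(1) False by simp
next
  case True
  note sl = slot_ne_b[OF i True]
  have tc: "ty i = (if E i \<and> \<not> E (Suc i) then 1 else if \<not> E i \<and> E (Suc i) then 2
   else if W i \<le> W (Suc i) then 3 else 4)" using type_char[OF i] .
  show ?thesis
  proof (cases "i = 0")
    case True
    have "\<not> W 0 \<le> W (Suc 0)" using W0 Wi[of 1] m_pos by simp
    then show ?thesis using sl tc True E0 m_pos \<open>ne i\<close> by (simp add: Dw_def)
  next
    case F1: False
    show ?thesis
    proof (cases "i = m")
      case True
      have "W m \<le> W (Suc m)" using Wm by simp
      then show ?thesis using sl tc True Em F1 \<open>ne i\<close> by (simp add: Dw_def)
    next
      case False
      have i1: "1 \<le> i" and si: "Suc i \<le> m" using F1 False i by auto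
      have EN: "E i \<and> \<not> E (Suc i) \<Longrightarrow> a (P (Suc i)) < a (P i)"
        using EN_desc[OF i] W_less[OF i1 si] by simp
      have NE: "\<not> E i \<and> E (Suc i) \<Longrightarrow> \<not> a (P (Suc i)) < a (P i)"
        using NE_asc[OF i] Wd[OF i1 si] by simp
      show ?thesis using sl tc Wd[OF i1 si] EN NE i1 si \<open>ne i\<close>
        by (cases "E i"; cases "E (Suc i)"; cases "a (P (Suc i)) < a (P i)") (simp_all add: Dw_def)
    qed
  qed
qed

lemma slotD:
  assumes i: "i \<le> m"
  shows "card {x \<in> Aa. P i \<le> x \<and> x < P (Suc i)} = Dw i + of_bool (ne i \<and> ty i = 2) + of_bool (ne i \<and> ty i = 3)"
proof (cases "ne i")
  case False
  have "{x \<in> Aa. P i \<le> x \<and> x < P (Suc i)} = {x. (1 \<le> x \<and> x < n \<and> a (Suc x) < a x) \<and> P i \<le> x \<and> x < P (Suc i)}"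
    unfolding Aa_def by auto
  then show ?thesis using slot_empty[OF i False, of a] False by simp
next
  case True
  note sl = slot_ne_a[OF i True]
  have tc: "ty i = (if E i \<and> \<not> E (Suc i) then 1 else if \<not> E i \<and> E (Suc i) then 2
   else if W i \<le> W (Suc i) then 3 else 4)" using type_char[OF i] .
  show ?thesis
  proof (cases "i = 0")
    case True
    have "\<not> W 0 \<le> W (Suc 0)" using W0 Wi[of 1] m_pos by simp
    then show ?thesis using sl tc True E0 m_pos \<open>ne i\<close> by (simp add: Dw_def)
  next
    case F1: False
    show ?thesis
    proof (cases "i = m")
      case True
      have "W m \<le> W (Suc m)" using Wm by simp
      then show ?thesis using sl tc True Em F1 \<open>ne i\<close> by (simp add: Dw_def)
    next
      case False
      have i1: "1 \<le> i" and si: "Suc i \<le> m" using F1 False i by auto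
      have EN: "E i \<and> \<not> E (Suc i) \<Longrightarrow> a (P (Suc i)) < a (P i)"
        using EN_desc[OF i] W_less[OF i1 si] by simp
      have NE: "\<not> E i \<and> E (Suc i) \<Longrightarrow> \<not> a (P (Suc i)) < a (P i)"
        using NE_asc[OF i] Wd[OF i1 si] by simp
      show ?thesis using sl tc Wd[OF i1 si] EN NE i1 si \<open>ne i\<close>
        by (cases "E i"; cases "E (Suc i)"; cases "a (P (Suc i)) < a (P i)") (simp_all add: Dw_def)
    qed
  qed
qed

end


context arr begin

lemma des_pf: "des_arr n k \<pi> \<phi> = card {x \<in> Ab. x < P (Suc m)}"
proof -
  have "des_arr n k \<pi> \<phi> = card {x. 1 \<le> x \<and> x < n \<and> b (Suc x) < b x}"
    unfolding des_arr_def pf_eq des_pos_red des_upt ..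
  also have "{x. 1 \<le> x \<and> x < n \<and> b (Suc x) < b x} = {x \<in> Ab. x < P (Suc m)}"
    unfolding Ab_def Pm by auto
  finally show ?thesis .
qed

lemma des_df: "dez_arr n k \<pi> \<phi> = card {x \<in> Aa. x < P (Suc m)}"
proof -
  have "dez_arr n k \<pi> \<phi> = card {x. 1 \<le> x \<and> x < n \<and> a (Suc x) < a x}"
    unfolding dez_arr_def df_eq des_pos_red raw_def des_upt ..
  also have "{x. 1 \<le> x \<and> x < n \<and> a (Suc x) < a x} = {x \<in> Aa. x < P (Suc m)}"
    unfolding Aa_def Pm by auto
  finally show ?thesis .
qed

lemma sum_bool: "(\<Sum>i\<le>(N::nat). (of_bool (Q i) :: nat)) = card {i \<in> {0..N}. Q i}"
proof -
  have "(\<Sum>i\<le>N. (of_bool (Q i) :: nat)) = card ({..N} \<inter> {i. Q i})"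
    by (simp add: sum_of_bool_eq)
  also have "{..N} \<inter> {i. Q i} = {i \<in> {0..N}. Q i}" by auto
  finally show ?thesis .
qed

lemma Der_nth: "t < m \<Longrightarrow> Der n k \<pi> \<phi> ! t = h (a (P (Suc t)))"
  using Der_eq df_nth kp_lt Pi[of "Suc t"] by simp

lemma sumDw: "(\<Sum>i\<le>m. Dw i) = des_word (Der n k \<pi> \<phi>)"
proof -
  have "des_word (Der n k \<pi> \<phi>) = card {t. Suc t < m \<and> a (P (Suc (Suc t))) < a (P (Suc t))}"
  proof -
    have "Der n k \<pi> \<phi> ! Suc t < Der n k \<pi> \<phi> ! t \<longleftrightarrow> a (P (Suc (Suc t))) < a (P (Suc t))"
      if "Suc t < m" for t
    proof -
      have r: "a (P (Suc t)) \<in> set raw" "a (P (Suc (Suc t))) \<in> set raw"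
        using a_in P_range[of "Suc t"] P_range[of "Suc (Suc t)"] that by auto
      show ?thesis using Der_nth[of t] Der_nth[of "Suc t"] that hfun_less_iff[OF r(2) r(1)]
        unfolding h_def by simp
    qed
    then show ?thesis unfolding des_word_def lenDer by (intro arg_cong[where f=card]) auto
  qed
  also have "\<dots> = card (Suc ` {t. Suc t < m \<and> a (P (Suc (Suc t))) < a (P (Suc t))})"
    by (simp add: card_image)
  also have "Suc ` {t. Suc t < m \<and> a (P (Suc (Suc t))) < a (P (Suc t))}
     = {i \<in> {0..m}. 1 \<le> i \<and> Suc i \<le> m \<and> a (P (Suc i)) < a (P i)}"
  proof (intro set_eqI iffI)
    fix x assume "x \<in> {i \<in> {0..m}. 1 \<le> i \<and> Suc i \<le> m \<and> a (P (Suc i)) < a (P i)}"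
    then show "x \<in> Suc ` {t. Suc t < m \<and> a (P (Suc (Suc t))) < a (P (Suc t))}"
      by (intro image_eqI[where x="x - 1"]) auto
  qed auto
  also have "card \<dots> = (\<Sum>i\<le>m. Dw i)" unfolding Dw_def sum_bool ..
  finally show ?thesis by simp
qed

lemma sum_tplus: "(\<Sum>i\<le>m. (of_bool (ne i \<and> ty i = j) :: nat)) = t_plus j n k \<pi> \<phi>"
  unfolding sum_bool t_plus_def slots_def lenDer by (intro arg_cong[where f=card]) auto

lemma part2a: "des_arr n k \<pi> \<phi> = des_word (Der n k \<pi> \<phi>) + t_plus 1 n k \<pi> \<phi> + t_plus 3 n k \<pi> \<phi>"
proof -
  have "des_arr n k \<pi> \<phi> = (\<Sum>i\<le>m. card {x \<in> Ab. P i \<le> x \<and> x < P (Suc i)})"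
    unfolding des_pf by (rule partition_card[OF P0 P_mono])
  also have "\<dots> = (\<Sum>i\<le>m. Dw i + of_bool (ne i \<and> ty i = 1) + of_bool (ne i \<and> ty i = 3))"
    by (rule sum.cong) (auto simp: slotP)
  also have "\<dots> = (\<Sum>i\<le>m. Dw i) + (\<Sum>i\<le>m. (of_bool (ne i \<and> ty i = 1) :: nat)) + (\<Sum>i\<le>m. (of_bool (ne i \<and> ty i = 3) :: nat))"
    by (simp add: sum.distrib)
  finally show ?thesis unfolding sumDw sum_tplus .
qed

lemma part2b: "dez_arr n k \<pi> \<phi> = des_word (Der n k \<pi> \<phi>) + t_plus 2 n k \<pi> \<phi> + t_plus 3 n k \<pi> \<phi>"
proof -
  have "dez_arr n k \<pi> \<phi> = (\<Sum>i\<le>m. card {x \<in> Aa. P i \<le> x \<and> x < P (Suc i)})"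
    unfolding des_df by (rule partition_card[OF P0 P_mono])
  also have "\<dots> = (\<Sum>i\<le>m. Dw i + of_bool (ne i \<and> ty i = 2) + of_bool (ne i \<and> ty i = 3))"
    by (rule sum.cong) (auto simp: slotD)
  also have "\<dots> = (\<Sum>i\<le>m. Dw i) + (\<Sum>i\<le>m. (of_bool (ne i \<and> ty i = 2) :: nat)) + (\<Sum>i\<le>m. (of_bool (ne i \<and> ty i = 3) :: nat))"
    by (simp add: sum.distrib)
  finally show ?thesis unfolding sumDw sum_tplus .
qed

lemma ty1: "i \<le> m \<Longrightarrow> ty i = 1 \<longleftrightarrow> E i \<and> \<not> E (Suc i)"
  using type_char[of i] by auto
lemma ty2: "i \<le> m \<Longrightarrow> ty i = 2 \<longleftrightarrow> \<not> E i \<and> E (Suc i)"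
  using type_char[of i] by auto

lemma part1a: "t_cnt 1 n k \<pi> \<phi> = t_cnt 2 n k \<pi> \<phi>"
proof -
  have c1: "t_cnt 1 n k \<pi> \<phi> = (\<Sum>t<Suc m. (of_bool (E t \<and> \<not> E (Suc t)) :: nat))"
  proof -
    have "t_cnt 1 n k \<pi> \<phi> = card {i \<in> {0..m}. E i \<and> \<not> E (Suc i)}"
      unfolding t_cnt_def slots_def lenDer using ty1 by (intro arg_cong[where f=card]) auto
    then show ?thesis using sum_bool[where N=m and Q="\<lambda>t. E t \<and> \<not> E (Suc t)"] by (simp add: lessThan_Suc_atMost)
  qed
  have c2: "t_cnt 2 n k \<pi> \<phi> = (\<Sum>t<Suc m. (of_bool (\<not> E t \<and> E (Suc t)) :: nat))"
  proof -
    have "t_cnt 2 n k \<pi> \<phi> = card {i \<in> {0..m}. \<not> E i \<and> E (Suc i)}"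
      unfolding t_cnt_def slots_def lenDer using ty2 by (intro arg_cong[where f=card]) auto
    then show ?thesis using sum_bool[where N=m and Q="\<lambda>t. \<not> E t \<and> E (Suc t)"] by (simp add: lessThan_Suc_atMost)
  qed
  show ?thesis unfolding c1 c2 changes_count[of E, OF E0, of "Suc m"] using Em by simp
qed

lemma part1b: "\<forall>j < length (slots12 n k \<pi> \<phi>). ty (slots12 n k \<pi> \<phi> ! j) = (if even j then 1 else 2)"
proof (intro allI impI)
  fix j assume j: "j < length (slots12 n k \<pi> \<phi>)"
  define Q where "Q = (\<lambda>i. ty i \<in> {1, 2})"
  have s: "slots12 n k \<pi> \<phi> = filter Q [0..<Suc m]" unfolding slots12_def lenDer Q_def by simp
  define c where "c = slots12 n k \<pi> \<phi> ! j"
  have jl: "j < length (filter Q [0..<Suc m])" using j s by simp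
  have cm: "c \<in> set (filter Q [0..<Suc m])" unfolding c_def s by (rule nth_mem[OF jl])
  then have cm': "c \<le> m" "Q c" by (auto simp del: upt_Suc)
  have card: "card {t. t < c \<and> Q t} = j" using filter_upt_nth_card[of j Q "Suc m"] j unfolding c_def s by simp
  have "{t. t < c \<and> Q t} = {..<c} \<inter> {t. E t \<noteq> E (Suc t)}"
    using cm' ty1 ty2 unfolding Q_def by auto
  then have "(\<Sum>t<c. (of_bool (E t \<noteq> E (Suc t)) :: nat)) = j"
    using card by (simp add: sum_of_bool_eq)
  then have Ec: "E c = even j" using changes_parity[of E c, OF E0] by simp
  have "E c \<noteq> E (Suc c)" using cm' ty1 ty2 unfolding Q_def by auto
  then show "ty (slots12 n k \<pi> \<phi> ! j) = (if even j then 1 else 2)"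
    using Ec ty1[OF cm'(1)] ty2[OF cm'(1)] unfolding c_def[symmetric] by auto
qed

end

theorem lemma2p5:
  fixes n k :: nat and \<pi> :: "nat \<Rightarrow> nat" and \<phi> :: "nat \<Rightarrow> int"
  assumes "n \<ge> 1" and "k \<ge> 1"
    and "is_arrangement n k \<pi> \<phi>"
    and "Der n k \<pi> \<phi> \<noteq> []"
  shows "t_cnt 1 n k \<pi> \<phi> = t_cnt 2 n k \<pi> \<phi>
         \<and> (\<forall>j < length (slots12 n k \<pi> \<phi>).
               slot_type n k \<pi> \<phi> (slots12 n k \<pi> \<phi> ! j) = (if even j then 1 else 2))
         \<and> des_arr n k \<pi> \<phi> = des_word (Der n k \<pi> \<phi>) + t_plus 1 n k \<pi> \<phi> + t_plus 3 n k \<pi> \<phi>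
         \<and> dez_arr n k \<pi> \<phi> = des_word (Der n k \<pi> \<phi>) + t_plus 2 n k \<pi> \<phi> + t_plus 3 n k \<pi> \<phi>"
proof -
  interpret arr n k \<pi> \<phi> using assms by unfold_locales
  show ?thesis using part1a part1b part2a part2b by simp
qed

end
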